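(* Let $E$ be a finite set, $w\geq 1$ an integer and $e\in E$. Then: (i) the map $\mathcal{R}_e:[0,\infty)^{E\setminus\{e\}}\to(0,1]$ is non-increasing in each variable; (ii) the map $\mathcal{D}:[0,\infty)^E\to[0,|E|)$ is strictly increasing in each variable; (iii) for every $\mathbf{X}\in(0,\infty)^E$ (all coordinates positive), the map $z\in[0,\infty)\mapsto z\,\mathcal{R}_e(z\mathbf{X})$ is strictly increasing, where $z\mathbf{X}$ is the vector with entries $zX_f$.
   Context: Let $E$ be a finite set and $w$ a positive integer. For $\mathbf{Y}=(Y_f)_{f\in E}\in[0,\infty)^E$ and $S\subseteq E$ write $\mathbf{Y}^S=\prod_{f\in S}Y_f$ (with $\mathbf{Y}^\emptyset=1$). For $e\in E$ define $$\mathcal{R}_e(\mathbf{Y})=\frac{\sum_{S\subseteq E\setminus\{e\},\,|S|\leq w-1}\mathbf{Y}^S}{\sum_{S\subseteq E\setminus\{e\},\,|S|\leq w}\mathbf{Y}^S},$$ which depends only on the coordinates $Y_f$, $f\neq e$, and define $$\mathcal{D}(\mathbf{Y})=\sum_{e\in E}\frac{Y_e\mathcal{R}_e(\mathbf{Y})}{1+Y_e\mathcal{R}_e(\mathbf{Y})}.$$ *)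

theory Defs
  imports "HOL-Analysis.Analysis"
begin

text \<open>Vectors in [0,inf)^E are represented as functions Y :: 'a => real; only the
  values on E matter. Y^S is the product of Y f over f in S.\<close>

definition Rfun :: "'a set \<Rightarrow> nat \<Rightarrow> 'a \<Rightarrow> ('a \<Rightarrow> real) \<Rightarrow> real" where
  "Rfun E w e Y =
     (\<Sum>S\<in>{S. S \<subseteq> E - {e} \<and> card S \<le> w - 1}. \<Prod>f\<in>S. Y f) /
     (\<Sum>S\<in>{S. S \<subseteq> E - {e} \<and> card S \<le> w}. \<Prod>f\<in>S. Y f)"

definition Dfun :: "'a set \<Rightarrow> nat \<Rightarrow> ('a \<Rightarrow> real) \<Rightarrow> real" where
  "Dfun E w Y = (\<Sum>e\<in>E. Y e * Rfun E w e Y / (1 + Y e * Rfun E w e Y))"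

end

theory Submission
  imports Defs
begin

definition Qs :: "('a \<Rightarrow> real) \<Rightarrow> 'a set \<Rightarrow> nat \<Rightarrow> real" where
  "Qs Y F k = (\<Sum>S\<in>Pow F. if card S < k then prod Y S else 0)"

definition Ws :: "('a \<Rightarrow> real) \<Rightarrow> 'a set \<Rightarrow> nat \<Rightarrow> real" where
  "Ws Y F k = (\<Sum>e\<in>F. Y e * Qs Y (F - {e}) (k - 1))"

lemma Qs_empty: "Qs Y {} k = (if 0 < k then 1 else 0)"
  by (simp add: Qs_def)

lemma Qs_zero: "Qs Y F 0 = 0"
  by (simp add: Qs_def)

lemma Qs_insert:
  assumes "finite F" "a \<notin> F"
  shows "Qs Y (insert a F) k = Qs Y F k + Y a * Qs Y F (k - 1)"
proof -
  have fin: "finite (Pow F)" using assms by simp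
  have inj: "inj_on (insert a) (Pow F)"
  proof (rule inj_onI)
    fix A B assume h: "A \<in> Pow F" "B \<in> Pow F" "insert a A = insert a B"
    moreover have "a \<notin> A" "a \<notin> B" using assms(2) h by auto
    ultimately show "A = B" using insert_ident by metis
  qed
  have disj: "Pow F \<inter> insert a ` Pow F = {}" using assms(2) by auto
  have "Qs Y (insert a F) k = (\<Sum>S\<in>Pow F. if card S < k then prod Y S else 0)
        + (\<Sum>S\<in>insert a ` Pow F. if card S < k then prod Y S else 0)"
    unfolding Qs_def Pow_insert by (rule sum.union_disjoint) (use fin disj in auto)
  also have "(\<Sum>S\<in>insert a ` Pow F. if card S < k then prod Y S else 0)
      = (\<Sum>S\<in>Pow F. if card (insert a S) < k then prod Y (insert a S) else 0)"
    by (simp add: sum.reindex[OF inj])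
  also have "\<dots> = (\<Sum>S\<in>Pow F. Y a * (if card S < k - 1 then prod Y S else 0))"
  proof (rule sum.cong[OF refl])
    fix S assume "S \<in> Pow F"
    then have "finite S" "a \<notin> S" using assms finite_subset by auto
    then show "(if card (insert a S) < k then prod Y (insert a S) else 0)
       = Y a * (if card S < k - 1 then prod Y S else 0)"
      by auto
  qed
  also have "\<dots> = Y a * Qs Y F (k-1)" by (simp add: Qs_def sum_distrib_left)
  finally show ?thesis by (simp add: Qs_def)
qed

lemma Qs_cong:
  assumes "\<And>f. f \<in> F \<Longrightarrow> Y f = Y' f"
  shows "Qs Y F k = Qs Y' F k"
  unfolding Qs_def
proof (rule sum.cong[OF refl])
  fix S assume "S \<in> Pow F"
  then have "prod Y S = prod Y' S" using assms by (intro prod.cong) auto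
  then show "(if card S < k then prod Y S else 0) = (if card S < k then prod Y' S else 0)" by simp
qed

lemma Ws_cong:
  assumes "\<And>f. f \<in> F \<Longrightarrow> Y f = Y' f"
  shows "Ws Y F k = Ws Y' F k"
  unfolding Ws_def
proof (rule sum.cong[OF refl])
  fix e assume "e \<in> F"
  then show "Y e * Qs Y (F - {e}) (k - 1) = Y' e * Qs Y' (F - {e}) (k - 1)"
    using assms Qs_cong[of "F - {e}" Y Y'] by auto
qed

lemma Qs_nonneg: "\<forall>f\<in>F. 0 \<le> Y f \<Longrightarrow> 0 \<le> Qs Y F k"
  unfolding Qs_def by (auto intro!: sum_nonneg prod_nonneg simp: subset_iff)

lemma Qs_ge1: "finite F \<Longrightarrow> \<forall>f\<in>F. 0 \<le> Y f \<Longrightarrow> 0 < k \<Longrightarrow> 1 \<le> Qs Y F k"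
proof (induction F rule: finite_induct)
  case empty then show ?case by (simp add: Qs_empty)
next
  case (insert a F)
  have "0 \<le> Y a * Qs Y F (k - 1)" using insert.prems by (intro mult_nonneg_nonneg Qs_nonneg) auto
  then show ?case using insert by (simp add: Qs_insert)
qed

lemma Qs_mono: "\<forall>f\<in>F. 0 \<le> Y f \<Longrightarrow> Qs Y F k \<le> Qs Y F (Suc k)"
  unfolding Qs_def by (rule sum_mono) (auto intro!: prod_nonneg)

lemma Qs_lc:
  assumes "finite F" "\<forall>f\<in>F. 0 \<le> Y f"
  shows "Qs Y F k * Qs Y F (Suc (Suc k)) \<le> (Qs Y F (Suc k))^2"
  using assms
proof (induction F arbitrary: k rule: finite_induct)
  case empty then show ?case by (simp add: Qs_empty)
next
  case (insert a F)
  have nnF: "\<forall>f\<in>F. 0 \<le> Y f" and y: "0 \<le> Y a" using insert.prems by auto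
  show ?case
  proof (cases k)
    case 0 then show ?thesis by (simp add: Qs_zero)
  next
    case (Suc m)
    define a0 where "a0 = Qs Y F m"
    define b where "b = Qs Y F (Suc m)"
    define c where "c = Qs Y F (Suc (Suc m))"
    define d where "d = Qs Y F (Suc (Suc (Suc m)))"
    define y where "y = Y a"
    have ih1: "a0 * c \<le> b^2" using insert.IH[OF nnF, of m] by (simp add: a0_def b_def c_def)
    have ih2: "b * d \<le> c^2" using insert.IH[OF nnF, of "Suc m"] by (simp add: d_def b_def c_def)
    have a0: "0 \<le> a0" "0 \<le> d" using nnF by (auto simp: a0_def d_def intro: Qs_nonneg)
    have b: "1 \<le> b" "1 \<le> c" using nnF insert.hyps by (auto simp: b_def c_def intro: Qs_ge1)
    have "(a0 * c) * (b * d) \<le> b^2 * c^2"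
      by (rule mult_mono) (use ih1 ih2 a0 b in auto)
    then have "(a0 * d) * (b * c) \<le> (b * c) * (b * c)"
      by (simp add: algebra_simps power2_eq_square)
    then have mid: "a0 * d \<le> b * c"
      using b by (simp add: mult_le_cancel_right)
    have eq: "(c + y*b)^2 - (b + y*a0)*(d+y*c) = (c^2 - b*d) + y*(b*c - a0*d) + y^2*(b^2 - a0*c)"
      by (simp add: algebra_simps power2_eq_square)
    have "0 \<le> y*(b*c - a0*d)" "0 \<le> y^2*(b^2 - a0*c)" using y mid ih1 by (auto simp: y_def)
    then have "(b + y*a0)*(d+y*c) \<le> (c + y*b)^2" using eq ih2 by linarith
    then show ?thesis using insert.hyps Suc
      by (simp add: Qs_insert a0_def b_def c_def d_def y_def)
  qed
qed

lemma Qs_T: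
  assumes "finite F" "\<forall>f\<in>F. 0 \<le> Y f"
  shows "(Qs Y F (Suc (Suc m)) - Qs Y F (Suc m)) * (\<Sum>j<Suc m. Qs Y F j) < (Qs Y F (Suc m))^2"
proof (induction m)
  case 0
  have "1 \<le> Qs Y F (Suc 0)" using assms by (auto intro: Qs_ge1)
  then show ?case by (simp add: Qs_zero)
next
  case (Suc m)
  define S where "S = (\<Sum>j<Suc m. Qs Y F j)"
  define b where "b = Qs Y F (Suc m)"
  define c where "c = Qs Y F (Suc (Suc m))"
  define d where "d = Qs Y F (Suc (Suc (Suc m)))"
  have ih: "(c - b) * S < b^2" using Suc by (simp add: S_def b_def c_def)
  have lc: "b * d \<le> c^2" using Qs_lc[OF assms, of "Suc m"] by (simp add: b_def c_def d_def)
  have S: "0 \<le> S" unfolding S_def by (intro sum_nonneg Qs_nonneg[OF assms(2)])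
  have b: "1 \<le> b" "1 \<le> c" using assms by (auto simp: b_def c_def intro: Qs_ge1)
  have h1: "b*(d-c) \<le> c*(c-b)" using lc by (simp add: algebra_simps power2_eq_square)
  have h2: "b*((d-c)*(S+b)) \<le> c*(c-b)*(S+b)"
    using mult_right_mono[OF h1, of "S+b"] S b by (simp add: algebra_simps)
  have h3: "(c-b)*(S+b) < b*c" using ih by (simp add: algebra_simps power2_eq_square)
  have h4: "c*((c-b)*(S+b)) < c*(b*c)" using h3 b by simp
  have "b*((d-c)*(S+b)) < b*c^2" using h2 h4 by (simp add: algebra_simps power2_eq_square)
  then have "(d-c)*(S+b) < c^2" using b by simp
  then show ?case by (simp add: S_def b_def c_def d_def)
qed

lemma Ws_insert:
  assumes "finite F" "a \<notin> F"
  shows "Ws Y (insert a F) k = Y a * Qs Y F (k-1) + Ws Y F k + Y a * Ws Y F (k-1)"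
proof -
  have "Ws Y (insert a F) k = Y a * Qs Y F (k-1) + (\<Sum>e\<in>F. Y e * Qs Y (insert a F - {e}) (k - 1))"
    unfolding Ws_def using assms by (simp add: sum.insert)
  also have "(\<Sum>e\<in>F. Y e * Qs Y (insert a F - {e}) (k - 1))
     = (\<Sum>e\<in>F. Y e * Qs Y (F - {e}) (k - 1) + Y a * (Y e * Qs Y (F - {e}) (k - 1 - 1)))"
  proof (rule sum.cong[OF refl])
    fix e assume "e \<in> F"
    then have "insert a F - {e} = insert a (F - {e})" using assms by auto
    then show "Y e * Qs Y (insert a F - {e}) (k - 1) = Y e * Qs Y (F - {e}) (k - 1) + Y a * (Y e * Qs Y (F - {e}) (k - 1 - 1))"
      using assms by (simp add: Qs_insert algebra_simps)
  qed
  also have "\<dots> = Ws Y F k + Y a * Ws Y F (k-1)"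
    by (simp add: Ws_def sum.distrib sum_distrib_left)
  finally show ?thesis by simp
qed

lemma sum_ind: "(\<Sum>j<Suc n. (if 0 < j then 1 else 0::real)) = real n"
  by (induction n) auto

lemma Ws_formula:
  assumes "finite F"
  shows "Ws Y F n = real n * Qs Y F n - (\<Sum>j<Suc n. Qs Y F j)"
  using assms
proof (induction F arbitrary: n rule: finite_induct)
  case empty
  then show ?case by (simp add: Ws_def Qs_empty sum_ind del: sum.lessThan_Suc)
next
  case (insert a F)
  show ?case
  proof (cases n)
    case 0 then show ?thesis by (simp add: Ws_def Qs_zero)
  next
    case (Suc m)
    have sh: "(\<Sum>j<Suc (Suc m). Qs Y F (j - 1)) = (\<Sum>j<Suc m. Qs Y F j)"
      by (subst sum.lessThan_Suc_shift) (simp add: Qs_zero)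
    have "(\<Sum>j<Suc (Suc m). Qs Y (insert a F) j)
       = (\<Sum>j<Suc (Suc m). Qs Y F j) + Y a * (\<Sum>j<Suc (Suc m). Qs Y F (j - 1))"
      using insert.hyps by (simp add: Qs_insert sum.distrib sum_distrib_left del: sum.lessThan_Suc)
    then have e1: "(\<Sum>j<Suc (Suc m). Qs Y (insert a F) j)
       = (\<Sum>j<Suc (Suc m). Qs Y F j) + Y a * (\<Sum>j<Suc m. Qs Y F j)" using sh by simp
    have i1: "Ws Y F (Suc m) = real (Suc m) * Qs Y F (Suc m) - (\<Sum>j<Suc (Suc m). Qs Y F j)"
      using insert.IH .
    have i2: "Ws Y F m = real m * Qs Y F m - (\<Sum>j<Suc m. Qs Y F j)"
      using insert.IH .
    have "Ws Y (insert a F) (Suc m) = Y a * Qs Y F m + Ws Y F (Suc m) + Y a * Ws Y F m"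
      using insert.hyps by (simp add: Ws_insert)
    also have "\<dots> = real (Suc m) * Qs Y (insert a F) (Suc m) - (\<Sum>j<Suc (Suc m). Qs Y (insert a F) j)"
      unfolding e1 i1 i2 using insert.hyps by (simp add: Qs_insert algebra_simps del: sum.lessThan_Suc)
    finally show ?thesis using Suc by simp
  qed
qed

lemma key:
  assumes "finite F" "\<forall>f\<in>F. 0 \<le> Y f" "1 \<le> w"
  shows "0 < (Qs Y F w + Ws Y F w) * Qs Y F (Suc w) - Ws Y F (Suc w) * Qs Y F w"
proof -
  obtain m where w: "w = Suc m" using assms(3) by (cases w) auto
  define A where "A = Qs Y F (Suc m)"
  define C where "C = Qs Y F (Suc (Suc m))"
  define T where "T = (\<Sum>j<Suc m. Qs Y F j)"
  have f1: "Ws Y F w = real (Suc m) * A - (T + A)"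
    using Ws_formula[OF assms(1)] by (simp add: w A_def T_def)
  have f2: "Ws Y F (Suc w) = real (Suc (Suc m)) * C - (T + A + C)"
    using Ws_formula[OF assms(1)] by (simp add: w A_def C_def T_def)
  have t: "(C - A) * T < A^2" using Qs_T[OF assms(1,2), of m] by (simp add: A_def C_def T_def)
  have "(Qs Y F w + Ws Y F w) * Qs Y F (Suc w) - Ws Y F (Suc w) * Qs Y F w = A^2 - (C - A) * T"
    unfolding f1 f2 by (simp add: w A_def[symmetric] C_def[symmetric] algebra_simps power2_eq_square)
  then show ?thesis using t by simp
qed


lemma Rfun_Qs:
  assumes "finite E" "1 \<le> w"
  shows "Rfun E w e Y = Qs Y (E - {e}) w / Qs Y (E - {e}) (Suc w)"
proof -
  have fin: "finite (Pow (E - {e}))" using assms by simp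
  have 1: "{S. S \<subseteq> E - {e} \<and> card S \<le> w - 1} = {S \<in> Pow (E-{e}). card S < w}" using assms(2) by auto
  have 2: "{S. S \<subseteq> E - {e} \<and> card S \<le> w} = {S \<in> Pow (E-{e}). card S < Suc w}" by auto
  show ?thesis unfolding Rfun_def 1 2 Qs_def sum.inter_filter[OF fin] ..
qed

lemma R_bounds:
  assumes "finite E" "1 \<le> w" "\<forall>f\<in>E - {e}. 0 \<le> Y f"
  shows "0 < Rfun E w e Y \<and> Rfun E w e Y \<le> 1"
proof -
  have fin: "finite (E - {e})" using assms by simp
  have a: "1 \<le> Qs Y (E - {e}) w" "1 \<le> Qs Y (E - {e}) (Suc w)"
    using Qs_ge1[OF fin assms(3)] assms(2) by auto
  have "Qs Y (E - {e}) w \<le> Qs Y (E - {e}) (Suc w)" using Qs_mono[OF assms(3)] .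
  then show ?thesis using a by (simp add: Rfun_Qs[OF assms(1,2)])
qed

lemma Dfun_Ws:
  assumes "finite E" "1 \<le> w" "\<forall>f\<in>E. 0 \<le> Y f"
  shows "Dfun E w Y = Ws Y E (Suc w) / Qs Y E (Suc w)"
proof -
  have "Dfun E w Y = (\<Sum>e\<in>E. Y e * Qs Y (E - {e}) w / Qs Y E (Suc w))"
    unfolding Dfun_def
  proof (rule sum.cong[OF refl])
    fix e assume e: "e \<in> E"
    have nn: "\<forall>f\<in>E - {e}. 0 \<le> Y f" using assms by auto
    have fin: "finite (E - {e})" using assms by simp
    define A where "A = Qs Y (E - {e}) w"
    define C where "C = Qs Y (E - {e}) (Suc w)"
    have C: "1 \<le> C" using Qs_ge1[OF fin nn] by (simp add: C_def)
    have A: "0 \<le> A" using Qs_nonneg[OF nn] by (simp add: A_def)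
    have E: "E = insert e (E - {e})" using e by auto
    have QE: "Qs Y E (Suc w) = C + Y e * A"
      by (subst E, subst Qs_insert) (use fin in \<open>auto simp: A_def C_def\<close>)
    have ye: "0 \<le> Y e" using assms e by auto
    have pos: "0 < C + Y e * A" using C A ye by (smt (verit) mult_nonneg_nonneg)
    show "Y e * Rfun E w e Y / (1 + Y e * Rfun E w e Y) = Y e * Qs Y (E - {e}) w / Qs Y E (Suc w)"
      unfolding QE Rfun_Qs[OF assms(1,2)] A_def[symmetric] C_def[symmetric]
      using C pos by (simp add: field_simps)
  qed
  also have "\<dots> = Ws Y E (Suc w) / Qs Y E (Suc w)"
    by (simp add: Ws_def sum_divide_distrib)
  finally show ?thesis .
qed

lemma Qs_deriv:
  assumes "finite F"
  shows "\<exists>d. ((\<lambda>z. Qs (\<lambda>f. z * X f) F k) has_real_derivative d) (at z) \<and> z * d = Ws (\<lambda>f. z * X f) F k"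
  using assms
proof (induction F arbitrary: k rule: finite_induct)
  case empty
  then show ?case by (intro exI[of _ 0]) (simp add: Qs_empty Ws_def)
next
  case (insert a F)
  obtain d1 where d1: "((\<lambda>z. Qs (\<lambda>f. z * X f) F k) has_real_derivative d1) (at z)"
    "z * d1 = Ws (\<lambda>f. z * X f) F k" using insert.IH by blast
  obtain d2 where d2: "((\<lambda>z. Qs (\<lambda>f. z * X f) F (k-1)) has_real_derivative d2) (at z)"
    "z * d2 = Ws (\<lambda>f. z * X f) F (k-1)" using insert.IH by blast
  have eq: "(\<lambda>z. Qs (\<lambda>f. z * X f) (insert a F) k)
     = (\<lambda>z. Qs (\<lambda>f. z * X f) F k + (z * X a) * Qs (\<lambda>f. z * X f) F (k - 1))"
    using insert.hyps by (simp add: Qs_insert)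
  have dz: "((\<lambda>z. z * X a) has_real_derivative X a) (at z)" by (auto intro!: derivative_eq_intros)
  have dm: "((\<lambda>z. (z * X a) * Qs (\<lambda>f. z * X f) F (k - 1)) has_real_derivative
      (X a * Qs (\<lambda>f. z * X f) F (k - 1) + d2 * (z * X a))) (at z)"
    using DERIV_mult[OF dz d2(1)] .
  have D: "((\<lambda>z. Qs (\<lambda>f. z * X f) (insert a F) k) has_real_derivative
      (d1 + (X a * Qs (\<lambda>f. z * X f) F (k - 1) + d2 * (z * X a)))) (at z)"
    unfolding eq using DERIV_add[OF d1(1) dm] .
  have "z * (d1 + (X a * Qs (\<lambda>f. z * X f) F (k - 1) + d2 * (z * X a)))
     = z * d1 + (z * X a) * Qs (\<lambda>f. z * X f) F (k - 1) + (z * X a) * (z * d2)"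
    by (simp add: algebra_simps)
  also have "\<dots> = Ws (\<lambda>f. z * X f) (insert a F) k"
    unfolding d1(2) d2(2) using insert.hyps by (simp add: Ws_insert)
  finally show ?case using D by blast
qed

lemma part1:
  fixes E :: "'a set" and w :: nat and e :: 'a and Y :: "'a \<Rightarrow> real" and f t
  assumes "finite E" and "w \<ge> 1" and "e \<in> E" and h: "(\<forall>g\<in>E - {e}. 0 \<le> Y g) \<and> f \<in> E - {e} \<and> Y f \<le> t"
  shows "Rfun E w e (Y(f := t)) \<le> Rfun E w e Y"
proof -
  define F where "F = E - {e} - {f}"
  have fin: "finite F" using assms by (simp add: F_def)
  have fF: "f \<notin> F" by (simp add: F_def)
  have Ei: "E - {e} = insert f F" using h by (auto simp: F_def)
  have nn: "\<forall>g\<in>F. 0 \<le> Y g" using h by (auto simp: F_def)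
  obtain v where w: "w = Suc v" using assms(2) by (cases w) auto
  define A where "A = Qs Y F (Suc v)"
  define B where "B = Qs Y F v"
  define C where "C = Qs Y F (Suc (Suc v))"
  define y where "y = Y f"
  have cg: "\<And>k. Qs (Y(f := t)) F k = Qs Y F k" using fF by (intro Qs_cong) auto
  have R1: "Rfun E w e Y = (A + y * B) / (C + y * A)"
    unfolding Rfun_Qs[OF assms(1,2)] Ei using fin fF by (simp add: Qs_insert w A_def B_def C_def y_def)
  have R2: "Rfun E w e (Y(f := t)) = (A + t * B) / (C + t * A)"
    unfolding Rfun_Qs[OF assms(1,2)] Ei using fin fF by (simp add: Qs_insert w A_def B_def C_def cg)
  have lc: "B * C \<le> A^2" using Qs_lc[OF fin nn, of v] by (simp add: A_def B_def C_def)
  have A: "0 \<le> A" "0 \<le> B" "1 \<le> C" using Qs_nonneg[OF nn] Qs_ge1[OF fin nn]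
    by (auto simp: A_def B_def C_def)
  have y: "0 \<le> y" "y \<le> t" using h by (auto simp: y_def)
  have p1: "0 < C + y * A" using A y by (smt (verit) mult_nonneg_nonneg)
  have p2: "0 < C + t * A" using A y by (smt (verit) mult_nonneg_nonneg)
  have eq: "(A + y*B)*(C + t*A) - (A + t*B)*(C + y*A) = (t - y) * (A^2 - B*C)"
    by (simp add: algebra_simps power2_eq_square)
  have "0 \<le> (t - y) * (A^2 - B*C)" using y lc by simp
  then have "(A + t*B)*(C + y*A) \<le> (A + y*B)*(C + t*A)" using eq by linarith
  then show "Rfun E w e (Y(f := t)) \<le> Rfun E w e Y"
    unfolding R1 R2 using p1 p2 by (simp add: divide_simps mult.commute)
qed

lemma part2:
  fixes E :: "'a set" and w :: nat and e :: 'a and Y :: "'a \<Rightarrow> real"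
  assumes "finite E" and "w \<ge> 1" and "e \<in> E" and h: "\<forall>f\<in>E. 0 \<le> Y f"
  shows "0 \<le> Dfun E w Y \<and> Dfun E w Y < real (card E)"
proof -
  have t: "\<And>x. x \<in> E \<Longrightarrow> 0 \<le> Y x * Rfun E w x Y / (1 + Y x * Rfun E w x Y)
      \<and> Y x * Rfun E w x Y / (1 + Y x * Rfun E w x Y) < 1"
  proof -
    fix x assume "x \<in> E"
    have "0 < Rfun E w x Y" using R_bounds[OF assms(1,2)] h by auto
    then have "0 \<le> Y x * Rfun E w x Y" using h \<open>x \<in> E\<close> by simp
    then show "0 \<le> Y x * Rfun E w x Y / (1 + Y x * Rfun E w x Y)
      \<and> Y x * Rfun E w x Y / (1 + Y x * Rfun E w x Y) < 1" by (simp add: divide_simps)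
  qed
  have "0 \<le> Dfun E w Y" unfolding Dfun_def using t by (auto intro!: sum_nonneg)
  have "Dfun E w Y < (\<Sum>x\<in>E. 1)" unfolding Dfun_def
    by (rule sum_strict_mono) (use assms t in auto)
  then have "Dfun E w Y < real (card E)" by simp
  then show ?thesis using \<open>0 \<le> Dfun E w Y\<close> by simp
qed

lemma part3:
  fixes E :: "'a set" and w :: nat and e :: 'a and Y :: "'a \<Rightarrow> real" and f t
  assumes "finite E" and "w \<ge> 1" and "e \<in> E" and h: "(\<forall>g\<in>E. 0 \<le> Y g) \<and> f \<in> E \<and> Y f < t"
  shows "Dfun E w Y < Dfun E w (Y(f := t))"
proof -
  define F where "F = E - {f}"
  have fin: "finite F" using assms by (simp add: F_def)
  have fF: "f \<notin> F" by (simp add: F_def)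
  have Ei: "E = insert f F" using h by (auto simp: F_def)
  have nn: "\<forall>g\<in>F. 0 \<le> Y g" using h by (auto simp: F_def)
  have nnY: "\<forall>g\<in>E. 0 \<le> Y g" using h by auto
  have nnY': "\<forall>g\<in>E. 0 \<le> (Y(f:=t)) g" using h by auto
  define A where "A = Qs Y F w"
  define C where "C = Qs Y F (Suc w)"
  define N0 where "N0 = Ws Y F (Suc w)"
  define N1 where "N1 = A + Ws Y F w"
  define y where "y = Y f"
  have cg: "\<And>k. Qs (Y(f := t)) F k = Qs Y F k" using fF by (intro Qs_cong) auto
  have cgw: "\<And>k. Ws (Y(f := t)) F k = Ws Y F k" using fF by (intro Ws_cong) auto
  have D1: "Dfun E w Y = (N0 + y * N1) / (C + y * A)"
    unfolding Dfun_Ws[OF assms(1,2) nnY] using fin fF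
    by (subst (1 2) Ei) (simp add: Qs_insert Ws_insert A_def C_def N0_def N1_def y_def algebra_simps)
  have D2: "Dfun E w (Y(f := t)) = (N0 + t * N1) / (C + t * A)"
    unfolding Dfun_Ws[OF assms(1,2) nnY'] using fin fF
    by (subst (1 2) Ei) (simp add: Qs_insert Ws_insert A_def C_def N0_def N1_def cg cgw algebra_simps)
  have k: "0 < N1 * C - N0 * A" using key[OF fin nn assms(2)]
    by (simp add: A_def C_def N0_def N1_def algebra_simps)
  have A: "0 \<le> A" "1 \<le> C" using Qs_nonneg[OF nn] Qs_ge1[OF fin nn] assms(2)
    by (auto simp: A_def C_def)
  have y: "0 \<le> y" "y < t" using h by (auto simp: y_def)
  have p1: "0 < C + y * A" using A y by (smt (verit) mult_nonneg_nonneg)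
  have p2: "0 < C + t * A" using A y by (smt (verit) mult_nonneg_nonneg)
  have eq: "(N0 + t*N1)*(C + y*A) - (N0 + y*N1)*(C + t*A) = (t - y) * (N1 * C - N0 * A)"
    by (simp add: algebra_simps)
  have "0 < (t - y) * (N1 * C - N0 * A)" using y k by simp
  then have "(N0 + y*N1)*(C + t*A) < (N0 + t*N1)*(C + y*A)" using eq by linarith
  then show "Dfun E w Y < Dfun E w (Y(f := t))"
    unfolding D1 D2 using p1 p2 by (simp add: divide_simps mult.commute)
qed

lemma part4:
  fixes E :: "'a set" and w :: nat and e :: 'a and X :: "'a \<Rightarrow> real"
  assumes "finite E" and "w \<ge> 1" and "e \<in> E" and hX: "\<forall>f\<in>E. 0 < X f"
  shows "strict_mono_on {0..} (\<lambda>z::real. z * Rfun E w e (\<lambda>f. z * X f))"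
proof -
  define F where "F = E - {e}"
  have fin: "finite F" using assms by (simp add: F_def)
  define q where "q = (\<lambda>k z. Qs (\<lambda>f. z * X f) F k)"
  have hz: "\<And>z. z * Rfun E w e (\<lambda>f. z * X f) = z * q w z / q (Suc w) z"
    by (simp add: Rfun_Qs[OF assms(1,2)] q_def F_def)
  show "strict_mono_on {0..} (\<lambda>z::real. z * Rfun E w e (\<lambda>f. z * X f))"
    unfolding strict_mono_on_def hz
  proof (intro allI impI)
    fix r s :: real assume rs: "r \<in> {0..} \<and> s \<in> {0..} \<and> r < s"
    show "r * q w r / q (Suc w) r < s * q w s / q (Suc w) s"
    proof (rule DERIV_pos_imp_increasing[where f="\<lambda>z. z * q w z / q (Suc w) z"])
      show "r < s" using rs by simp
    next
      fix z :: real assume z: "r \<le> z" "z \<le> s"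
      then have z0: "0 \<le> z" using rs by simp
      have nn: "\<forall>f\<in>F. 0 \<le> z * X f" using hX z0 by (auto simp: F_def less_imp_le)
      obtain d1 where d1: "(q w has_real_derivative d1) (at z)" "z * d1 = Ws (\<lambda>f. z * X f) F w"
        using Qs_deriv[OF fin, of X w z] unfolding q_def by blast
      obtain d2 where d2: "(q (Suc w) has_real_derivative d2) (at z)" "z * d2 = Ws (\<lambda>f. z * X f) F (Suc w)"
        using Qs_deriv[OF fin, of X "Suc w" z] unfolding q_def by blast
      have C: "1 \<le> q (Suc w) z" using Qs_ge1[OF fin nn] by (simp add: q_def)
      have "((\<lambda>z. z * q w z) has_real_derivative (q w z + d1 * z)) (at z)"
        using DERIV_mult[OF DERIV_ident d1(1)] by simp
      then have D: "((\<lambda>z. z * q w z / q (Suc w) z) has_real_derivative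
          (((q w z + d1 * z) * q (Suc w) z - z * q w z * d2) / (q (Suc w) z * q (Suc w) z))) (at z)"
        using DERIV_divide[OF _ d2(1)] C by simp
      have "((q w z + d1 * z) * q (Suc w) z - z * q w z * d2)
          = (q w z + Ws (\<lambda>f. z * X f) F w) * q (Suc w) z - Ws (\<lambda>f. z * X f) F (Suc w) * q w z"
        unfolding d1(2)[symmetric] d2(2)[symmetric] by (simp add: algebra_simps)
      also have "\<dots> > 0" using key[OF fin nn assms(2)] by (simp add: q_def)
      finally have "0 < ((q w z + d1 * z) * q (Suc w) z - z * q w z * d2) / (q (Suc w) z * q (Suc w) z)"
        using C by simp
      then show "\<exists>y. ((\<lambda>z. z * q w z / q (Suc w) z) has_real_derivative y) (at z) \<and> 0 < y"
        using D by blast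
    qed
  qed

qed

theorem proposition1:
  fixes E :: "'a set" and w :: nat and e :: 'a
  assumes "finite E" and "w \<ge> 1" and "e \<in> E"
  shows
    "(\<forall>Y. (\<forall>f\<in>E - {e}. 0 \<le> Y f) \<longrightarrow> 0 < Rfun E w e Y \<and> Rfun E w e Y \<le> 1)
     \<and> (\<forall>Y f t. (\<forall>g\<in>E - {e}. 0 \<le> Y g) \<and> f \<in> E - {e} \<and> Y f \<le> t
          \<longrightarrow> Rfun E w e (Y(f := t)) \<le> Rfun E w e Y)
     \<and> (\<forall>Y. (\<forall>f\<in>E. 0 \<le> Y f) \<longrightarrow> 0 \<le> Dfun E w Y \<and> Dfun E w Y < real (card E))
     \<and> (\<forall>Y f t. (\<forall>g\<in>E. 0 \<le> Y g) \<and> f \<in> E \<and> Y f < t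
          \<longrightarrow> Dfun E w Y < Dfun E w (Y(f := t)))
     \<and> (\<forall>X. (\<forall>f\<in>E. 0 < X f) \<longrightarrow>
          strict_mono_on {0..} (\<lambda>z::real. z * Rfun E w e (\<lambda>f. z * X f)))"
proof (intro conjI allI impI)
  fix Y :: "'a \<Rightarrow> real" assume h: "\<forall>f\<in>E - {e}. 0 \<le> Y f"
  show "0 < Rfun E w e Y" using R_bounds[OF assms(1,2) h] by simp
  show "Rfun E w e Y \<le> 1" using R_bounds[OF assms(1,2) h] by simp
next
  fix Y :: "'a \<Rightarrow> real" and f t
  assume h: "(\<forall>g\<in>E - {e}. 0 \<le> Y g) \<and> f \<in> E - {e} \<and> Y f \<le> t"
  show "Rfun E w e (Y(f := t)) \<le> Rfun E w e Y" by (rule part1[OF assms h])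
next
  fix Y :: "'a \<Rightarrow> real" assume h: "\<forall>f\<in>E. 0 \<le> Y f"
  show "0 \<le> Dfun E w Y" using part2[OF assms h] by simp
  show "Dfun E w Y < real (card E)" using part2[OF assms h] by simp
next
  fix Y :: "'a \<Rightarrow> real" and f t
  assume h: "(\<forall>g\<in>E. 0 \<le> Y g) \<and> f \<in> E \<and> Y f < t"
  show "Dfun E w Y < Dfun E w (Y(f := t))" by (rule part3[OF assms h])
next
  fix X :: "'a \<Rightarrow> real" assume h: "\<forall>f\<in>E. 0 < X f"
  show "strict_mono_on {0..} (\<lambda>z::real. z * Rfun E w e (\<lambda>f. z * X f))" by (rule part4[OF assms h])
qed

end
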